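(* There exists a Stackelberg game $(G,L,F)$ such that $\mathcal{X}^{PS\text{-}NF}\not\subseteq\mathcal{X}^S$, where $\mathcal{X}^S$ refers to $(G,L,F)$ and $\mathcal{X}^{PS\text{-}NF}$ refers to $(G,N,\emptyset)$.
   Context: A finite game is $G=(N,\{S_p\}_{p\in N},\{u_p\}_{p\in N})$ with players $N=\{1,\dots,n\}$, finite nonempty strategy sets $S_p$, and utilities $u_p:S\to\mathbb{R}$ on $S=\prod_{p\in N}S_p$; write $s=(s_p,s_{-p})$ with $s_{-p}\in S_{-p}=\prod_{q\neq p}S_q$. $\mathcal{X}=\Delta(S)$ is the set of probability distributions on $S$ and $u_p(x)=\sum_{s\in S}x(s)u_p(s)$ for $x\in\mathcal{X}$. For $P\subseteq N$, $\mathcal{X}^{CE}_P$ is the set of $x\in\mathcal{X}$ such that for every $p\in P$ and all $s_p\neq s_p'\in S_p$: $\sum_{s_{-p}\in S_{-p}} x(s_p,s_{-p})\,(u_p(s_p,s_{-p})-u_p(s_p',s_{-p}))\ge 0$; $\mathcal{X}^{CE}=\mathcal{X}^{CE}_N$ is the set of correlated equilibria of $G$. A Stackelberg game (SG) is a triple $(G,L,F)$ with $L\cup F=N$ and $L\cap F=\emptyset$ (leaders and followers). For $P\subseteq N$, $\Pi_P$ is the set of ordered subsets of $P$ (finite sequences of pairwise distinct elements of $P$, including the empty sequence $\varnothing$); for $\pi\in\Pi_P$ and $p\in P$ not occurring in $\pi$, $\pi p$ is $\pi$ with $p$ appended; when used as a set, $\pi$ means its set of entries. $\mathbf{X}=\prod_{\pi\in\Pi_L}\mathcal{X}^{CE}_{\pi\cup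 F}$, with elements $\mathbf{x}=[x_\pi]_{\pi\in\Pi_L}$. For $\mathbf{x}\in\mathbf{X}$ and $\pi\in\Pi_L$, $x_\pi$ is stable if $u_p(x_\pi)\ge u_p(x_{\pi p})$ for all $p\in L\setminus\pi$; $\mathbf{x}$ is stable if $x_\varnothing$ is stable, and perfectly stable if $x_\pi$ is stable for every $\pi\in\Pi_L$; $\mathbf{X}^{S}$ and $\mathbf{X}^{PS}$ denote the sets of stable and perfectly stable elements of $\mathbf{X}$. $\mathcal{X}^S=\{x_\varnothing:\mathbf{x}\in\mathbf{X}^S\}$ and $\mathcal{X}^{PS}=\{x_\varnothing:\mathbf{x}\in\mathbf{X}^{PS}\}$ (for the given SG). $\mathcal{X}^{S\text{-}NF}$ and $\mathcal{X}^{PS\text{-}NF}$ are the sets $\mathcal{X}^S$ and $\mathcal{X}^{PS}$ computed for the SG $(G,N,\emptyset)$ in which every player is a leader. *)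

theory Defs
  imports "HOL-Library.FuncSet" Complex_Main
begin

(* A finite game with players N = {1..n}; strategies of player p are the set S p
   (strategies encoded as naturals); pure profiles are extensional functions
   s : {1..n} -> strategies; u p s is the utility of player p at profile s. *)

definition players :: "nat \<Rightarrow> nat set" where
  "players n = {1..n}"

definition profiles :: "nat \<Rightarrow> (nat \<Rightarrow> nat set) \<Rightarrow> (nat \<Rightarrow> nat) set" where
  "profiles n S = PiE (players n) S"

definition finite_game :: "nat \<Rightarrow> (nat \<Rightarrow> nat set) \<Rightarrow> (nat \<Rightarrow> (nat \<Rightarrow> nat) \<Rightarrow> real) \<Rightarrow> bool" where
  "finite_game n S u \<longleftrightarrow> n \<ge> 1 \<and> (\<forall>p \<in> players n. finite (S p) \<and> S p \<noteq> {})"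

definition distributions :: "nat \<Rightarrow> (nat \<Rightarrow> nat set) \<Rightarrow> ((nat \<Rightarrow> nat) \<Rightarrow> real) set" where
  "distributions n S = {x. (\<forall>s \<in> profiles n S. x s \<ge> 0) \<and>
                          (\<forall>s. s \<notin> profiles n S \<longrightarrow> x s = 0) \<and>
                          (\<Sum>s \<in> profiles n S. x s) = 1}"

definition exp_util :: "nat \<Rightarrow> (nat \<Rightarrow> nat set) \<Rightarrow> (nat \<Rightarrow> (nat \<Rightarrow> nat) \<Rightarrow> real)
                        \<Rightarrow> nat \<Rightarrow> ((nat \<Rightarrow> nat) \<Rightarrow> real) \<Rightarrow> real" where
  "exp_util n S u p x = (\<Sum>s \<in> profiles n S. x s * u p s)"

definition CE_set :: "nat \<Rightarrow> (nat \<Rightarrow> nat set) \<Rightarrow> (nat \<Rightarrow> (nat \<Rightarrow> nat) \<Rightarrow> real)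
                      \<Rightarrow> nat set \<Rightarrow> ((nat \<Rightarrow> nat) \<Rightarrow> real) set" where
  "CE_set n S u P = {x \<in> distributions n S.
     \<forall>p \<in> P. \<forall>a \<in> S p. \<forall>b \<in> S p. a \<noteq> b \<longrightarrow>
       (\<Sum>s \<in> {s \<in> profiles n S. s p = a}. x s * (u p s - u p (s(p := b)))) \<ge> 0}"

definition ordered_subsets :: "nat set \<Rightarrow> nat list set" where
  "ordered_subsets P = {\<pi>. distinct \<pi> \<and> set \<pi> \<subseteq> P}"

definition SG_X :: "nat \<Rightarrow> (nat \<Rightarrow> nat set) \<Rightarrow> (nat \<Rightarrow> (nat \<Rightarrow> nat) \<Rightarrow> real)
                    \<Rightarrow> nat set \<Rightarrow> nat set \<Rightarrow> (nat list \<Rightarrow> ((nat \<Rightarrow> nat) \<Rightarrow> real)) set" where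
  "SG_X n S u L F = {xx. \<forall>\<pi> \<in> ordered_subsets L. xx \<pi> \<in> CE_set n S u (set \<pi> \<union> F)}"

definition stable_at :: "nat \<Rightarrow> (nat \<Rightarrow> nat set) \<Rightarrow> (nat \<Rightarrow> (nat \<Rightarrow> nat) \<Rightarrow> real)
                    \<Rightarrow> nat set \<Rightarrow> (nat list \<Rightarrow> ((nat \<Rightarrow> nat) \<Rightarrow> real)) \<Rightarrow> nat list \<Rightarrow> bool" where
  "stable_at n S u L xx \<pi> \<longleftrightarrow>
     (\<forall>p \<in> L - set \<pi>. exp_util n S u p (xx \<pi>) \<ge> exp_util n S u p (xx (\<pi> @ [p])))"

definition X_S :: "nat \<Rightarrow> (nat \<Rightarrow> nat set) \<Rightarrow> (nat \<Rightarrow> (nat \<Rightarrow> nat) \<Rightarrow> real)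
                    \<Rightarrow> nat set \<Rightarrow> nat set \<Rightarrow> ((nat \<Rightarrow> nat) \<Rightarrow> real) set" where
  "X_S n S u L F = {xx []| xx. xx \<in> SG_X n S u L F \<and> stable_at n S u L xx []}"

definition X_PS :: "nat \<Rightarrow> (nat \<Rightarrow> nat set) \<Rightarrow> (nat \<Rightarrow> (nat \<Rightarrow> nat) \<Rightarrow> real)
                    \<Rightarrow> nat set \<Rightarrow> nat set \<Rightarrow> ((nat \<Rightarrow> nat) \<Rightarrow> real) set" where
  "X_PS n S u L F = {xx []| xx. xx \<in> SG_X n S u L F \<and>
                         (\<forall>\<pi> \<in> ordered_subsets L. stable_at n S u L xx \<pi>)}"

end

theory Submission
  imports Defs
begin

definition dd :: "nat \<Rightarrow> nat" where "dd = (\<lambda>p. if p = 1 \<or> p = 2 then 1 else undefined)"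
definition ee :: "nat \<Rightarrow> nat" where "ee = (\<lambda>p. if p = 1 \<or> p = 2 then 0 else undefined)"
definition SS :: "nat \<Rightarrow> nat set" where "SS = (\<lambda>_. {0,1})"
definition uu :: "nat \<Rightarrow> (nat \<Rightarrow> nat) \<Rightarrow> real" where
  "uu p s = real (s p) + 2 * (1 - real (s (3 - p)))"
definition delta :: "(nat \<Rightarrow> nat) \<Rightarrow> (nat \<Rightarrow> nat) \<Rightarrow> real" where
  "delta d s = (if s = d then 1 else 0)"

lemma pl2: "players 2 = {1,2}" by (auto simp: players_def)

lemma fin_prof: "finite (profiles 2 SS)"
  by (simp add: profiles_def pl2 SS_def finite_PiE)

lemma dd_in: "dd \<in> profiles 2 SS"
  by (auto simp: profiles_def pl2 SS_def dd_def PiE_def extensional_def)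
lemma ee_in: "ee \<in> profiles 2 SS"
  by (auto simp: profiles_def pl2 SS_def ee_def PiE_def extensional_def)

lemma sum_delta: "finite A \<Longrightarrow> (\<Sum>s\<in>A. delta d s * g s) = (if d \<in> A then g d else 0)"
proof -
  assume f: "finite A"
  have "(\<Sum>s\<in>A. delta d s * g s) = (\<Sum>s\<in>A. if d = s then g s else 0)"
    by (rule sum.cong) (auto simp: delta_def)
  also have "\<dots> = (if d \<in> A then g d else 0)" using f by (simp add: sum.delta)
  finally show ?thesis .
qed

lemma delta_dist: "d \<in> profiles 2 SS \<Longrightarrow> delta d \<in> distributions 2 SS"
  using sum_delta[OF fin_prof, of d "\<lambda>_. 1"]
  by (auto simp: distributions_def delta_def)

lemma eu: "d \<in> profiles 2 SS \<Longrightarrow> exp_util 2 SS uu p (delta d) = uu p d"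
  using sum_delta[OF fin_prof] by (simp add: exp_util_def)

lemma dd_CE: "P \<subseteq> {1,2} \<Longrightarrow> delta dd \<in> CE_set 2 SS uu P"
proof -
  assume P: "P \<subseteq> {1,2}"
  have fin: "finite {s \<in> profiles 2 SS. s p = a}" for p a using fin_prof by simp
  show ?thesis unfolding CE_set_def
  proof (intro CollectI conjI delta_dist dd_in ballI impI)
    fix p a b assume p: "p \<in> P" and a: "a \<in> SS p" and b: "b \<in> SS p" and ab: "a \<noteq> b"
    have "(\<Sum>s\<in>{s \<in> profiles 2 SS. s p = a}. delta dd s * (uu p s - uu p (s(p := b))))
        = (if dd \<in> {s \<in> profiles 2 SS. s p = a} then uu p dd - uu p (dd(p := b)) else 0)"
      by (rule sum_delta[OF fin])
    moreover have "p = 1 \<or> p = 2" using p P by auto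
    ultimately show "0 \<le> (\<Sum>s\<in>{s \<in> profiles 2 SS. s p = a}. delta dd s * (uu p s - uu p (s(p := b))))"
      using a b ab by (auto simp: SS_def uu_def dd_def)
  qed
qed

theorem mainTheorem15:
  shows "\<exists>n S u L F. finite_game n S u \<and> L \<union> F = players n \<and> L \<inter> F = {} \<and>
           \<not> (X_PS n S u (players n) {} \<subseteq> X_S n S u L F)"
proof (intro exI conjI)
  show "finite_game 2 SS uu" by (simp add: finite_game_def SS_def)
  show "{} \<union> players 2 = players 2" by simp
  show "{} \<inter> players 2 = {}" by simp
  define xx where "xx = (\<lambda>\<pi>::nat list. if \<pi> = [] then delta ee else delta dd)"
  have inPS: "delta ee \<in> X_PS 2 SS uu (players 2) {}"
    unfolding X_PS_def
  proof (intro CollectI exI conjI)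
    show "delta ee = xx []" by (simp add: xx_def)
    show "xx \<in> SG_X 2 SS uu (players 2) {}"
      unfolding SG_X_def
    proof (intro CollectI ballI)
      fix \<pi> assume "\<pi> \<in> ordered_subsets (players 2)"
      hence sub: "set \<pi> \<union> {} \<subseteq> {1,2}" by (auto simp: ordered_subsets_def pl2)
      show "xx \<pi> \<in> CE_set 2 SS uu (set \<pi> \<union> {})"
      proof (cases "\<pi> = []")
        case True
        then show ?thesis using delta_dist[OF ee_in] by (simp add: xx_def CE_set_def)
      next
        case False
        then show ?thesis using dd_CE[OF sub] by (simp add: xx_def)
      qed
    qed
    show "\<forall>\<pi>\<in>ordered_subsets (players 2). stable_at 2 SS uu (players 2) xx \<pi>"
    proof
      fix \<pi> assume "\<pi> \<in> ordered_subsets (players 2)"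
      show "stable_at 2 SS uu (players 2) xx \<pi>"
        unfolding stable_at_def
      proof
        fix p assume p: "p \<in> players 2 - set \<pi>"
        hence p12: "p = 1 \<or> p = 2" by (auto simp: pl2)
        show "exp_util 2 SS uu p (xx (\<pi> @ [p])) \<le> exp_util 2 SS uu p (xx \<pi>)"
        proof (cases "\<pi> = []")
          case True
          then show ?thesis using p12 by (auto simp: xx_def eu[OF dd_in] eu[OF ee_in]) (auto simp: uu_def dd_def ee_def)
        next
          case False
          then show ?thesis by (simp add: xx_def)
        qed
      qed
    qed
  qed
  have notS: "delta ee \<notin> X_S 2 SS uu {} (players 2)"
  proof
    assume "delta ee \<in> X_S 2 SS uu {} (players 2)"
    then obtain yy where y: "delta ee = yy []" "yy \<in> SG_X 2 SS uu {} (players 2)"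
      by (auto simp: X_S_def)
    have "[] \<in> ordered_subsets {}" by (simp add: ordered_subsets_def)
    hence "delta ee \<in> CE_set 2 SS uu (players 2)" using y by (auto simp: SG_X_def)
    hence c: "0 \<le> (\<Sum>s\<in>{s \<in> profiles 2 SS. s 1 = 0}. delta ee s * (uu 1 s - uu 1 (s(1 := 1))))"
      unfolding CE_set_def by (auto simp: pl2 SS_def)
    have fin: "finite {s \<in> profiles 2 SS. s 1 = 0}" using fin_prof by simp
    have "(\<Sum>s\<in>{s \<in> profiles 2 SS. s 1 = 0}. delta ee s * (uu 1 s - uu 1 (s(1 := 1)))) = -1"
      unfolding sum_delta[OF fin] using ee_in by (simp add: uu_def ee_def)
    with c show False by simp
  qed
  show "\<not> X_PS 2 SS uu (players 2) {} \<subseteq> X_S 2 SS uu {} (players 2)"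
    using inPS notS by blast
qed

end
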